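(* Let $\alpha\geq1$, $N>0$, $B_N(x_1,x_2,x_3):=(\sin Nx_3,\cos Nx_3,0)$ and $\phi(x):=(1+|x|^2)^{-\alpha}$ on $\mathbb{R}^3$, and let $\omega_0^1:=\mathop{\mathrm{curl}}\mathop{\mathrm{curl}}(\phi B_N)$. If $N$ is sufficiently large compared with $\alpha$ ($N\gg\alpha$), then $\omega_0^1$ has no zeros on $\mathbb{R}^3$. *)

theory Defs
  imports "HOL-Analysis.Analysis"
begin

definition pdiff :: "3 \<Rightarrow> (real^3 \<Rightarrow> real) \<Rightarrow> real^3 \<Rightarrow> real" where
  "pdiff i f x = deriv (\<lambda>t. f (x + t *\<^sub>R axis i 1)) 0"

definition curl :: "(real^3 \<Rightarrow> real^3) \<Rightarrow> real^3 \<Rightarrow> real^3" where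
  "curl F x = vector
     [ pdiff 2 (\<lambda>y. F y $ 3) x - pdiff 3 (\<lambda>y. F y $ 2) x,
       pdiff 3 (\<lambda>y. F y $ 1) x - pdiff 1 (\<lambda>y. F y $ 3) x,
       pdiff 1 (\<lambda>y. F y $ 2) x - pdiff 2 (\<lambda>y. F y $ 1) x ]"

definition B :: "real \<Rightarrow> real^3 \<Rightarrow> real^3" where
  "B N x = vector [sin (N * x $ 3), cos (N * x $ 3), 0]"

definition phi :: "real \<Rightarrow> real^3 \<Rightarrow> real" where
  "phi \<alpha> x = (1 + (norm x)\<^sup>2) powr (- \<alpha>)"

definition omega01 :: "real \<Rightarrow> real \<Rightarrow> real^3 \<Rightarrow> real^3" where
  "omega01 \<alpha> N = curl (curl (\<lambda>x. phi \<alpha> x *\<^sub>R B N x))"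

end

theory Submission
  imports Defs
begin

lemma ax3: "(axis (1::3) (1::real)) $ 1 = 1" "(axis (1::3) (1::real)) $ 2 = 0" "(axis (1::3) (1::real)) $ 3 = 0"
  "(axis (2::3) (1::real)) $ 1 = 0" "(axis (2::3) (1::real)) $ 2 = 1" "(axis (2::3) (1::real)) $ 3 = 0"
  "(axis (3::3) (1::real)) $ 1 = 0" "(axis (3::3) (1::real)) $ 2 = 0" "(axis (3::3) (1::real)) $ 3 = 1"
  by (simp_all add: axis_def)

lemma pdiff1:
  assumes "((\<lambda>s. g s (x$2) (x$3)) has_real_derivative D) (at (x$1))"
  shows "pdiff 1 (\<lambda>y. g (y$1) (y$2) (y$3)) x = D"
proof -
  have "((\<lambda>t. g (t + x$1) (x$2) (x$3)) has_real_derivative D) (at 0)"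
    using assms DERIV_shift[of "\<lambda>s. g s (x$2) (x$3)" D 0 "x$1"] by simp
  then show ?thesis unfolding pdiff_def by (simp add: ax3 DERIV_imp_deriv add.commute)
qed

lemma pdiff2:
  assumes "((\<lambda>s. g (x$1) s (x$3)) has_real_derivative D) (at (x$2))"
  shows "pdiff 2 (\<lambda>y. g (y$1) (y$2) (y$3)) x = D"
proof -
  have "((\<lambda>t. g (x$1) (t + x$2) (x$3)) has_real_derivative D) (at 0)"
    using assms DERIV_shift[of "\<lambda>s. g (x$1) s (x$3)" D 0 "x$2"] by simp
  then show ?thesis unfolding pdiff_def by (simp add: ax3 DERIV_imp_deriv add.commute)
qed

lemma pdiff3:
  assumes "((\<lambda>s. g (x$1) (x$2) s) has_real_derivative D) (at (x$3))"
  shows "pdiff 3 (\<lambda>y. g (y$1) (y$2) (y$3)) x = D"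
proof -
  have "((\<lambda>t. g (x$1) (x$2) (t + x$3)) has_real_derivative D) (at 0)"
    using assms DERIV_shift[of "\<lambda>s. g (x$1) (x$2) s" D 0 "x$3"] by simp
  then show ?thesis unfolding pdiff_def by (simp add: ax3 DERIV_imp_deriv add.commute)
qed

definition U :: "real \<Rightarrow> real \<Rightarrow> real \<Rightarrow> real" where
  "U a b c = 1 + a^2 + b^2 + c^2"

definition Pw :: "real \<Rightarrow> real \<Rightarrow> real \<Rightarrow> real \<Rightarrow> real" where
  "Pw e a b c = U a b c powr e"

lemma U_pos: "U a b c > 0" unfolding U_def by (simp add: add_pos_nonneg)

lemma Pw_d1[derivative_intros]:
  "(f has_real_derivative f') (at x) \<Longrightarrow>
   ((\<lambda>s. Pw e (f s) b c) has_real_derivative (2*e*f x * Pw (e-1) (f x) b c * f')) (at x)"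
  unfolding Pw_def
  by (rule DERIV_cong[OF DERIV_fun_powr[where g="\<lambda>s. U (f s) b c"]])
     (auto intro!: derivative_eq_intros simp: U_pos[unfolded U_def] U_def)

lemma Pw_d2[derivative_intros]:
  "(f has_real_derivative f') (at x) \<Longrightarrow>
   ((\<lambda>s. Pw e a (f s) c) has_real_derivative (2*e*f x * Pw (e-1) a (f x) c * f')) (at x)"
  unfolding Pw_def
  by (rule DERIV_cong[OF DERIV_fun_powr[where g="\<lambda>s. U a (f s) c"]])
     (auto intro!: derivative_eq_intros simp: U_pos[unfolded U_def] U_def)

lemma Pw_d3[derivative_intros]:
  "(f has_real_derivative f') (at x) \<Longrightarrow>
   ((\<lambda>s. Pw e a b (f s)) has_real_derivative (2*e*f x * Pw (e-1) a b (f x) * f')) (at x)"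
  unfolding Pw_def
  by (rule DERIV_cong[OF DERIV_fun_powr[where g="\<lambda>s. U a b (f s)"]])
     (auto intro!: derivative_eq_intros simp: U_pos[unfolded U_def] U_def)

lemma phi_Pw: "phi \<alpha> y = Pw (-\<alpha>) (y$1) (y$2) (y$3)"
proof -
  have "(norm y)^2 = y \<bullet> y" by (rule power2_norm_eq_inner)
  then show ?thesis unfolding phi_def Pw_def U_def
    by (simp add: inner_vec_def sum_3 power2_eq_square add.assoc)
qed

definition "F1c e N a b c = Pw e a b c * sin (N*c)"
definition "F2c e N a b c = Pw e a b c * cos (N*c)"
definition "G1c e N a b c = N * Pw e a b c * sin (N*c) - 2*e*c*Pw (e-1) a b c * cos (N*c)"
definition "G2c e N a b c = 2*e*c*Pw (e-1) a b c * sin (N*c) + N * Pw e a b c * cos (N*c)"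
definition "G3c e N a b c = 2*e*a*Pw (e-1) a b c * cos (N*c) - 2*e*b*Pw (e-1) a b c * sin (N*c)"

lemma dF2_3: "((\<lambda>s. F2c e N a b s) has_real_derivative
   (2*e*c*Pw (e-1) a b c * cos (N*c) - N * Pw e a b c * sin (N*c))) (at c)"
  unfolding F2c_def by (auto intro!: derivative_eq_intros simp: algebra_simps)
lemma dF1_3: "((\<lambda>s. F1c e N a b s) has_real_derivative
   (2*e*c*Pw (e-1) a b c * sin (N*c) + N * Pw e a b c * cos (N*c))) (at c)"
  unfolding F1c_def by (auto intro!: derivative_eq_intros simp: algebra_simps)
lemma dF2_1: "((\<lambda>s. F2c e N s b c) has_real_derivative
   (2*e*a*Pw (e-1) a b c * cos (N*c))) (at a)"
  unfolding F2c_def by (auto intro!: derivative_eq_intros simp: algebra_simps)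
lemma dF1_2: "((\<lambda>s. F1c e N a s c) has_real_derivative
   (2*e*b*Pw (e-1) a b c * sin (N*c))) (at b)"
  unfolding F1c_def by (auto intro!: derivative_eq_intros simp: algebra_simps)

lemma pdiff_0: "pdiff i (\<lambda>y. 0) x = 0"
  unfolding pdiff_def by simp

lemma curlF: "curl (\<lambda>x. phi \<alpha> x *\<^sub>R B N x) y =
   vector [G1c (-\<alpha>) N (y$1) (y$2) (y$3), G2c (-\<alpha>) N (y$1) (y$2) (y$3), G3c (-\<alpha>) N (y$1) (y$2) (y$3)]"
proof -
  have e1: "(\<lambda>y. (phi \<alpha> y *\<^sub>R B N y) $ 1) = (\<lambda>y. F1c (-\<alpha>) N (y$1) (y$2) (y$3))"
    by (simp add: B_def phi_Pw F1c_def)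
  have e2: "(\<lambda>y. (phi \<alpha> y *\<^sub>R B N y) $ 2) = (\<lambda>y. F2c (-\<alpha>) N (y$1) (y$2) (y$3))"
    by (simp add: B_def phi_Pw F2c_def)
  have e3: "(\<lambda>y. (phi \<alpha> y *\<^sub>R B N y) $ 3) = (\<lambda>y. 0)"
    by (simp add: B_def)
  show ?thesis unfolding curl_def e1 e2 e3 pdiff_0
    by (simp add: pdiff1[where g="F2c (-\<alpha>) N", OF dF2_1] pdiff2[where g="F1c (-\<alpha>) N", OF dF1_2] pdiff3[where g="F1c (-\<alpha>) N", OF dF1_3] pdiff3[where g="F2c (-\<alpha>) N", OF dF2_3] G1c_def G2c_def G3c_def)
qed

lemma dG3_2: "((\<lambda>s. G3c e N a s c) has_real_derivative
   (2*e*a*(2*(e-1)*b*Pw (e-1-1) a b c) * cos (N*c) - 2*e*Pw (e-1) a b c * sin (N*c)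
    - 2*e*b*(2*(e-1)*b*Pw (e-1-1) a b c) * sin (N*c))) (at b)"
  unfolding G3c_def by (auto intro!: derivative_eq_intros simp: algebra_simps)
lemma dG3_1: "((\<lambda>s. G3c e N s b c) has_real_derivative
   (2*e*Pw (e-1) a b c * cos (N*c) + 2*e*a*(2*(e-1)*a*Pw (e-1-1) a b c) * cos (N*c)
    - 2*e*b*(2*(e-1)*a*Pw (e-1-1) a b c) * sin (N*c))) (at a)"
  unfolding G3c_def by (auto intro!: derivative_eq_intros simp: algebra_simps)
lemma dG2_3: "((\<lambda>s. G2c e N a b s) has_real_derivative
   (2*e*Pw (e-1) a b c * sin (N*c) + 2*e*c*(2*(e-1)*c*Pw (e-1-1) a b c) * sin (N*c)
    + 2*e*c*Pw (e-1) a b c * N * cos (N*c) + N*(2*e*c*Pw (e-1) a b c) * cos (N*c)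
    - N^2 * Pw e a b c * sin (N*c))) (at c)"
  unfolding G2c_def by (auto intro!: derivative_eq_intros simp: algebra_simps power2_eq_square)
lemma dG1_3: "((\<lambda>s. G1c e N a b s) has_real_derivative
   (N*(2*e*c*Pw (e-1) a b c) * sin (N*c) + N^2 * Pw e a b c * cos (N*c)
    - 2*e*Pw (e-1) a b c * cos (N*c) - 2*e*c*(2*(e-1)*c*Pw (e-1-1) a b c) * cos (N*c)
    + 2*e*c*Pw (e-1) a b c * N * sin (N*c))) (at c)"
  unfolding G1c_def by (auto intro!: derivative_eq_intros simp: algebra_simps power2_eq_square)

lemma omega_dot:
  fixes x :: "real^3" and \<alpha> N :: real
  defines "a \<equiv> x$1" and "b \<equiv> x$2" and "c \<equiv> x$3" and "e \<equiv> -\<alpha>"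
  shows "omega01 \<alpha> N x $ 1 * sin (N*c) + omega01 \<alpha> N x $ 2 * cos (N*c) =
    N^2 * Pw e a b c - 4*e*Pw (e-1) a b c
    - 4*e*(e-1)*Pw (e-1-1) a b c * (a^2+b^2+c^2 - (a * sin (N*c) + b * cos (N*c))^2)"
proof -
  have cf: "curl (\<lambda>x. phi \<alpha> x *\<^sub>R B N x) = (\<lambda>y.
   vector [G1c (-\<alpha>) N (y$1) (y$2) (y$3), G2c (-\<alpha>) N (y$1) (y$2) (y$3), G3c (-\<alpha>) N (y$1) (y$2) (y$3)])"
    by (rule ext) (rule curlF)
  have o1: "omega01 \<alpha> N x $ 1 = pdiff 2 (\<lambda>y. G3c (-\<alpha>) N (y$1) (y$2) (y$3)) x
      - pdiff 3 (\<lambda>y. G2c (-\<alpha>) N (y$1) (y$2) (y$3)) x"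
    unfolding omega01_def cf by (simp add: curl_def)
  have o2: "omega01 \<alpha> N x $ 2 = pdiff 3 (\<lambda>y. G1c (-\<alpha>) N (y$1) (y$2) (y$3)) x
      - pdiff 1 (\<lambda>y. G3c (-\<alpha>) N (y$1) (y$2) (y$3)) x"
    unfolding omega01_def cf by (simp add: curl_def)
  have sc: "sin (N*c)^2 + cos (N*c)^2 = 1" by simp
  show ?thesis
    unfolding o1 o2
    unfolding pdiff2[where g="G3c (-\<alpha>) N", OF dG3_2] pdiff1[where g="G3c (-\<alpha>) N", OF dG3_1]
       pdiff3[where g="G2c (-\<alpha>) N", OF dG2_3] pdiff3[where g="G1c (-\<alpha>) N", OF dG1_3]
    unfolding a_def[symmetric] b_def[symmetric] c_def[symmetric] e_def[symmetric]
    using sc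
    by algebra
qed

lemma Pw_step: "Pw (e - 1) a b c = U a b c * Pw (e - 1 - 1) a b c" "Pw e a b c = U a b c * Pw (e - 1) a b c"
proof -
  have u: "U a b c powr 1 = U a b c" using U_pos[of a b c] by simp
  have "U a b c powr (e-1) = U a b c powr ((e-1-1) + 1)" by simp
  also have "\<dots> = U a b c powr (e-1-1) * U a b c powr 1" by (rule powr_add)
  finally show "Pw (e - 1) a b c = U a b c * Pw (e - 1 - 1) a b c" unfolding Pw_def u by simp
  have "U a b c powr e = U a b c powr ((e-1) + 1)" by simp
  also have "\<dots> = U a b c powr (e-1) * U a b c powr 1" by (rule powr_add)
  finally show "Pw e a b c = U a b c * Pw (e - 1) a b c" unfolding Pw_def u by simp
qed

lemma key_ineq:
  fixes al N P0 P1 P2 u r t :: real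
  assumes "al \<ge> 1" "N \<ge> 2*al+1" "P2 > 0" "P1 = u * P2" "P0 = u * P1" "u \<ge> 1" "r \<le> u" "t \<ge> 0"
  shows "N^2 * P0 - 4*(-al)*P1 - 4*(-al)*(-al-1)*P2*(r - t) > 0"
proof -
  have p1: "P1 > 0" using assms by simp
  have p0: "P0 > 0" using assms p1 by simp
  have h1: "P2 * (r - t) \<le> P1"
  proof -
    have "P2 * (r - t) \<le> P2 * u" using assms by (intro mult_left_mono) auto
    then show ?thesis using assms by (simp add: mult.commute)
  qed
  have h2: "P1 \<le> P0" using assms p1 by simp
  have c: "4*al*(al+1) \<ge> 0" using assms by simp
  have "4*(-al)*(-al-1)*P2*(r - t) = 4*al*(al+1)*(P2*(r-t))" by (simp add: algebra_simps)
  also have "\<dots> \<le> 4*al*(al+1)*P1" using mult_left_mono[OF h1 c] .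
  finally have A: "4*(-al)*(-al-1)*P2*(r - t) \<le> 4*al*(al+1)*P1" .
  have B: "4*al^2*P1 \<le> 4*al^2*P0" using h2 by (intro mult_left_mono) auto
  have N2: "N^2 > 4*al^2"
  proof -
    have "N > 2*al" "2*al \<ge> 0" using assms by auto
    then have "(2*al)^2 < N^2" by (intro power_strict_mono) auto
    then show ?thesis by (simp add: power_mult_distrib)
  qed
  have "N^2 * P0 > 4*al^2*P0" using N2 p0 by simp
  then show ?thesis using A B by (simp add: algebra_simps power2_eq_square)
qed

theorem proposition4p1:
  fixes \<alpha> :: real
  assumes "\<alpha> \<ge> 1"
  shows "\<exists>N0>0. \<forall>N::real. N \<ge> N0 \<longrightarrow> (\<forall>x::real^3. omega01 \<alpha> N x \<noteq> 0)"
proof (intro exI[of _ "2*\<alpha>+1"] conjI allI impI)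
  show "2*\<alpha>+1 > 0" using assms by simp
  fix N :: real and x :: "real^3"
  assume N: "N \<ge> 2*\<alpha>+1"
  define a where "a = x$1"
  define b where "b = x$2"
  define c where "c = x$3"
  have eq: "omega01 \<alpha> N x $ 1 * sin (N*c) + omega01 \<alpha> N x $ 2 * cos (N*c) =
    N^2 * Pw (-\<alpha>) a b c - 4*(-\<alpha>)*Pw (-\<alpha>-1) a b c
    - 4*(-\<alpha>)*(-\<alpha>-1)*Pw (-\<alpha>-1-1) a b c * (a^2+b^2+c^2 - (a * sin (N*c) + b * cos (N*c))^2)"
    unfolding a_def b_def c_def by (rule omega_dot)
  have "N^2 * Pw (-\<alpha>) a b c - 4*(-\<alpha>)*Pw (-\<alpha>-1) a b c
    - 4*(-\<alpha>)*(-\<alpha>-1)*Pw (-\<alpha>-1-1) a b c * (a^2+b^2+c^2 - (a * sin (N*c) + b * cos (N*c))^2) > 0"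
  proof (rule key_ineq[OF assms N])
    show "Pw (-\<alpha>-1-1) a b c > 0" unfolding Pw_def using U_pos[of a b c] by simp
    show "Pw (-\<alpha>-1) a b c = U a b c * Pw (-\<alpha>-1-1) a b c" by (rule Pw_step(1))
    show "Pw (-\<alpha>) a b c = U a b c * Pw (-\<alpha>-1) a b c" by (rule Pw_step(2))
    show "U a b c \<ge> 1" unfolding U_def by simp
    show "a^2+b^2+c^2 \<le> U a b c" unfolding U_def by simp
    show "(a * sin (N*c) + b * cos (N*c))^2 \<ge> 0" by simp
  qed
  then have "omega01 \<alpha> N x $ 1 * sin (N*c) + omega01 \<alpha> N x $ 2 * cos (N*c) \<noteq> 0"
    using eq by simp
  then show "omega01 \<alpha> N x \<noteq> 0" by auto
qed

end
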